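(* Let $n\ge 1$, let $Z$ be a vector space over $\mathbf{F}_2$, and let $V$ be the $\mathbf{F}_2$-space of all subsets of $I_n=\{1,\dots,n\}$ with addition the symmetric difference $\triangle$ (so the singletons $\{1\},\dots,\{n\}$ form a basis). Then $$Z^2(V,Z)=Z^2_0(V,Z)\oplus B^2(V,Z).$$
   Context: A cocycle is a map $f:V\times V\to Z$ satisfying, for all $v_1,v_2\in V$: $f(0,v_1)=0$, $f(v_1,v_1)=0$, $f(v_1,v_2)=f(v_2,v_1)$ and $f(v_1+v_2,v_2)=f(v_1,v_2)$ (here $0=\emptyset$). $Z^2(V,Z)$ is the $\mathbf{F}_2$-space of all cocycles. $B^2(V,Z)$ is the subspace of maps $\delta(g)(v_1,v_2)=g(v_1+v_2)+g(v_1)+g(v_2)$ where $g:V\to Z$ ranges over functions with $g(0)=0$. $Z^2_0(V,Z)$ is the subspace of cocycles $f$ such that $f(\sigma,\{i\})=0$ for every nonempty $\sigma\subseteq I_n$ and every $i\in I_n$ with $i>\max(\sigma)$. *)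

theory Defs
  imports Main
begin

definition symdiff :: "'a set \<Rightarrow> 'a set \<Rightarrow> 'a set" where
  "symdiff A B = (A - B) \<union> (B - A)"

definition Vn :: "nat \<Rightarrow> nat set set" where
  "Vn n = Pow {1..n}"

text \<open>Maps V x V -> Z are represented as functions that vanish outside V x V.\<close>
definition Z2 :: "nat \<Rightarrow> (nat set \<Rightarrow> nat set \<Rightarrow> 'z::ab_group_add) set" where
  "Z2 n = {f. (\<forall>a b. (a \<notin> Vn n \<or> b \<notin> Vn n) \<longrightarrow> f a b = 0) \<and>
     (\<forall>v1\<in>Vn n. \<forall>v2\<in>Vn n.
        f {} v1 = 0 \<and> f v1 v1 = 0 \<and> f v1 v2 = f v2 v1 \<and> f (symdiff v1 v2) v2 = f v1 v2)}"

definition B2 :: "nat \<Rightarrow> (nat set \<Rightarrow> nat set \<Rightarrow> 'z::ab_group_add) set" where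
  "B2 n = {(\<lambda>a b. if a \<in> Vn n \<and> b \<in> Vn n then g (symdiff a b) + g a + g b else 0)
            | g. g {} = 0}"

definition Z2_0 :: "nat \<Rightarrow> (nat set \<Rightarrow> nat set \<Rightarrow> 'z::ab_group_add) set" where
  "Z2_0 n = {f \<in> Z2 n. \<forall>\<sigma> i. \<sigma> \<noteq> {} \<and> \<sigma> \<subseteq> {1..n} \<and> i \<in> {1..n} \<and> i > Max \<sigma>
                 \<longrightarrow> f \<sigma> {i} = 0}"

end

theory Submission
  imports Defs
begin

lemma symdiff_simps[simp]:
  "symdiff {} v = v" "symdiff v v = {}" "symdiff (symdiff a b) b = a"
  unfolding symdiff_def by auto

lemma symdiff_comm: "symdiff a b = symdiff b a"
  unfolding symdiff_def by auto

lemma symdiff_V: "a \<in> Vn n \<Longrightarrow> b \<in> Vn n \<Longrightarrow> symdiff a b \<in> Vn n"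
  unfolding symdiff_def Vn_def by auto

lemma char2_neg:
  assumes "\<forall>z::'z::ab_group_add. z + z = 0"
  shows "- (x::'z) = x"
  using assms by (metis add_eq_0_iff)

definition cob :: "nat \<Rightarrow> (nat set \<Rightarrow> 'z::ab_group_add) \<Rightarrow> nat set \<Rightarrow> nat set \<Rightarrow> 'z" where
  "cob n g = (\<lambda>a b. if a \<in> Vn n \<and> b \<in> Vn n then g (symdiff a b) + g a + g b else 0)"

lemma B2_eq: "B2 n = {cob n g | g. g {} = 0}"
  unfolding B2_def cob_def by simp

lemma cob_Z2:
  assumes char2: "\<forall>z::'z::ab_group_add. z + z = 0" and g0: "g {} = (0::'z)"
  shows "cob n g \<in> Z2 n"
proof -
  have c: "\<And>x::'z. x + x = 0" using char2 by blast
  have n: "- x = x" for x :: 'z using char2_neg[OF char2] .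
  show ?thesis
    unfolding Z2_def
  proof (intro CollectI conjI allI impI ballI)
    fix a b assume "a \<notin> Vn n \<or> b \<notin> Vn n"
    then show "cob n g a b = 0" unfolding cob_def by auto
  next
    fix v1 v2 assume v: "v1 \<in> Vn n" "v2 \<in> Vn n"
    have e: "{} \<in> Vn n" unfolding Vn_def by simp
    have s: "symdiff v1 v2 \<in> Vn n" using symdiff_V[OF v] .
    show "cob n g {} v1 = 0" unfolding cob_def using v e g0 c by simp
    show "cob n g v1 v1 = 0" unfolding cob_def using v g0 c by simp
    show "cob n g v1 v2 = cob n g v2 v1" unfolding cob_def using v
      by (simp add: symdiff_comm add.commute)
    have "g (symdiff (symdiff v1 v2) v2) + g (symdiff v1 v2) + g v2 = g (symdiff v1 v2) + g v1 + g v2"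
      by (simp add: add.commute)
    then show "cob n g (symdiff v1 v2) v2 = cob n g v1 v2" unfolding cob_def using v s by simp
  qed
qed

lemma Z2_diff:
  assumes "f \<in> Z2 n" "h \<in> Z2 n"
  shows "(\<lambda>a b. f a b - h a b) \<in> Z2 n"
  using assms unfolding Z2_def by auto

lemma Z2_add:
  assumes "f \<in> Z2 n" "h \<in> Z2 n"
  shows "(\<lambda>a b. f a b + h a b) \<in> Z2 n"
  using assms unfolding Z2_def by auto

lemma ins_sym: "i \<notin> \<sigma> \<Longrightarrow> symdiff \<sigma> {i} = insert i \<sigma>"
  unfolding symdiff_def by auto

lemma max_less:
  fixes \<sigma> :: "nat set"
  assumes "\<sigma> \<noteq> {}" "\<sigma> \<subseteq> {1..n}" "i > Max \<sigma>"
  shows "\<forall>x\<in>\<sigma>. x < i"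
proof -
  have "finite \<sigma>" by (rule finite_subset[OF assms(2)]) simp
  show ?thesis
  proof
    fix x assume "x \<in> \<sigma>"
    then have "x \<le> Max \<sigma>" using Max_ge[OF \<open>finite \<sigma>\<close>] by blast
    then show "x < i" using assms(3) by simp
  qed
qed

definition gdef :: "(nat set \<Rightarrow> nat set \<Rightarrow> 'z::ab_group_add) \<Rightarrow> nat set \<Rightarrow> 'z" where
  "gdef f \<tau> = (\<Sum>j\<in>\<tau>. f {x\<in>\<tau>. x < j} {j})"

lemma gdef_insert:
  assumes "finite \<sigma>" "\<forall>x\<in>\<sigma>. x < i"
  shows "gdef f (insert i \<sigma>) = f \<sigma> {i} + gdef f \<sigma>"
proof -
  have ni: "i \<notin> \<sigma>" using assms by blast
  have "gdef f (insert i \<sigma>) = f {x\<in>insert i \<sigma>. x < i} {i} + (\<Sum>j\<in>\<sigma>. f {x\<in>insert i \<sigma>. x < j} {j})"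
    unfolding gdef_def using assms(1) ni by simp
  also have "{x\<in>insert i \<sigma>. x < i} = \<sigma>" using assms by auto
  also have "(\<Sum>j\<in>\<sigma>. f {x\<in>insert i \<sigma>. x < j} {j}) = gdef f \<sigma>"
    unfolding gdef_def
  proof (rule sum.cong)
    fix j assume "j \<in> \<sigma>"
    then have "{x\<in>insert i \<sigma>. x < j} = {x\<in>\<sigma>. x < j}" using assms by auto
    then show "f {x\<in>insert i \<sigma>. x < j} {j} = f {x\<in>\<sigma>. x < j} {j}" by simp
  qed simp
  finally show ?thesis .
qed

lemma additive:
  fixes n :: nat
  assumes char2: "\<forall>z::'z::ab_group_add. z + z = 0" and g0: "g {} = (0::'z)"
    and H: "\<And>\<sigma> i. \<sigma> \<noteq> {} \<Longrightarrow> \<sigma> \<subseteq> {1..n} \<Longrightarrow> i \<in> {1..n} \<Longrightarrow> i > Max \<sigma>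
              \<Longrightarrow> g (insert i \<sigma>) + g \<sigma> + g {i} = 0"
  shows "\<tau> \<subseteq> {1..n} \<Longrightarrow> g \<tau> = (\<Sum>j\<in>\<tau>. g {j})"
proof (induction "card \<tau>" arbitrary: \<tau> rule: less_induct)
  case less
  have fin: "finite \<tau>" by (rule finite_subset[OF less.prems]) simp
  show ?case
  proof (cases "\<tau> = {}")
    case True then show ?thesis using g0 by simp
  next
    case False
    define m where "m = Max \<tau>"
    define \<sigma> where "\<sigma> = \<tau> - {m}"
    have mt: "m \<in> \<tau>" using fin False m_def by simp
    have tau: "\<tau> = insert m \<sigma>" using mt \<sigma>_def by auto
    show ?thesis
    proof (cases "\<sigma> = {}")
      case True then show ?thesis using tau by simp
    next
      case False
      have sub: "\<sigma> \<subseteq> {1..n}" using less.prems \<sigma>_def by auto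
      have finS: "finite \<sigma>" using fin \<sigma>_def by simp
      have lt: "\<forall>x\<in>\<sigma>. x < m"
      proof
        fix x assume "x \<in> \<sigma>"
        then have "x \<in> \<tau>" "x \<noteq> m" unfolding \<sigma>_def by auto
        then have "x \<le> m" unfolding m_def using Max_ge[OF fin] by blast
        then show "x < m" using \<open>x \<noteq> m\<close> by simp
      qed
      have "Max \<sigma> < m" using lt finS False by simp
      moreover have "m \<in> {1..n}" using mt less.prems by auto
      ultimately have e: "g \<tau> + g \<sigma> + g {m} = 0" using H[OF False sub] tau by simp
      have cs: "card \<sigma> < card \<tau>" unfolding \<sigma>_def by (rule card_Diff1_less[OF fin mt])
      have IH: "g \<sigma> = (\<Sum>j\<in>\<sigma>. g {j})" using less.hyps[OF cs sub] .
      have "g \<tau> = - (g \<sigma> + g {m})" using e unfolding add.assoc add_eq_0_iff2 .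
      also have "\<dots> = g \<sigma> + g {m}" using char2_neg[OF char2] by simp
      finally have gt: "g \<tau> = g \<sigma> + g {m}" .
      have nm: "m \<notin> \<sigma>" unfolding \<sigma>_def by simp
      have "(\<Sum>j\<in>\<tau>. g {j}) = g {m} + (\<Sum>j\<in>\<sigma>. g {j})"
        unfolding tau using finS nm by simp
      then show ?thesis using gt IH by (simp add: add.commute)
    qed
  qed
qed

lemma sum_symdiff:
  assumes char2: "\<forall>z::'z::ab_group_add. z + z = 0" and fa: "finite a" and fb: "finite b"
  shows "(\<Sum>j\<in>symdiff a b. (h j::'z)) + sum h a + sum h b = 0"
proof -
  have c: "\<And>x::'z. x + x = 0" using char2 by blast
  have 1: "sum h (symdiff a b) = sum h (a - b) + sum h (b - a)"
    unfolding symdiff_def by (rule sum.union_disjoint) (use fa fb in auto)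
  have 2: "sum h a = sum h (a - b) + sum h (a \<inter> b)"
  proof -
    have "sum h a = sum h (a - a \<inter> b) + sum h (a \<inter> b)"
      by (rule sum.subset_diff) (use fa in auto)
    moreover have "a - a \<inter> b = a - b" by auto
    ultimately show ?thesis by simp
  qed
  have 3: "sum h b = sum h (b - a) + sum h (a \<inter> b)"
  proof -
    have "sum h b = sum h (b - a \<inter> b) + sum h (a \<inter> b)"
      by (rule sum.subset_diff) (use fb in auto)
    moreover have "b - a \<inter> b = b - a" by auto
    ultimately show ?thesis by simp
  qed
  have "sum h (a - b) + sum h (b - a) + (sum h (a - b) + sum h (a \<inter> b)) + (sum h (b - a) + sum h (a \<inter> b))
        = (sum h (a - b) + sum h (a - b)) + (sum h (b - a) + sum h (b - a)) + (sum h (a \<inter> b) + sum h (a \<inter> b))"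
    by (simp add: add_ac)
  then show ?thesis using 1 2 3 c by simp
qed

theorem mainTheorem2:
  fixes n :: nat
  assumes "n \<ge> 1"
    and char2: "\<forall>z::'z::ab_group_add. z + z = 0"
  shows "Z2 n = {(\<lambda>a b. f a b + g a b) | f g. f \<in> (Z2_0 n :: (nat set \<Rightarrow> nat set \<Rightarrow> 'z) set) \<and> g \<in> B2 n}
         \<and> Z2_0 n \<inter> B2 n = {(\<lambda>a b. 0 :: 'z)}"
proof
  have c: "\<And>x::'z. x + x = 0" using char2 by blast
  show "Z2 n = {(\<lambda>a b. f a b + g a b) | f g. f \<in> (Z2_0 n :: (nat set \<Rightarrow> nat set \<Rightarrow> 'z) set) \<and> g \<in> B2 n}"
  proof (rule set_eqI, rule iffI)
    fix F :: "nat set \<Rightarrow> nat set \<Rightarrow> 'z"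
    assume F: "F \<in> Z2 n"
    define g where "g = gdef F"
    have g0: "g {} = 0" unfolding g_def gdef_def by simp
    define h where "h = (\<lambda>a b. F a b - cob n g a b)"
    have hZ: "h \<in> Z2 n" unfolding h_def by (rule Z2_diff[OF F cob_Z2[where g=g, OF char2 g0]])
    have "h \<in> Z2_0 n"
      unfolding Z2_0_def
    proof (intro CollectI conjI hZ allI impI, elim conjE)
      fix \<sigma> i assume ne: "\<sigma> \<noteq> {}" and sub: "\<sigma> \<subseteq> {1..n}" and i: "i \<in> {1..n}" and mx: "Max \<sigma> < i"
      have lt: "\<forall>x\<in>\<sigma>. x < i" using max_less[OF ne sub mx] .
      have fin: "finite \<sigma>" by (rule finite_subset[OF sub]) simp
      have ni: "i \<notin> \<sigma>" using lt by blast
      have V: "\<sigma> \<in> Vn n" "{i} \<in> Vn n" using sub i unfolding Vn_def by auto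
      have F0: "F {} {i} = 0" using F V(2) unfolding Z2_def by blast
      have "g {i} = F {x\<in>{i}. x < i} {i}" unfolding g_def gdef_def by simp
      also have "{x\<in>{i}. x < i} = {}" by auto
      finally have gi: "g {i} = 0" using F0 by simp
      have gins: "g (insert i \<sigma>) = F \<sigma> {i} + g \<sigma>" unfolding g_def using gdef_insert[OF fin lt] .
      have "cob n g \<sigma> {i} = F \<sigma> {i} + (g \<sigma> + g \<sigma>)"
        unfolding cob_def using V ins_sym[OF ni] gins gi by (simp add: add_ac)
      then show "h \<sigma> {i} = 0" unfolding h_def using c by simp
    qed
    moreover have "cob n g \<in> B2 n" unfolding B2_eq using g0 by blast
    moreover have "F = (\<lambda>a b. h a b + cob n g a b)" unfolding h_def by simp
    ultimately show "F \<in> {(\<lambda>a b. f a b + g a b) | f g. f \<in> (Z2_0 n :: (nat set \<Rightarrow> nat set \<Rightarrow> 'z) set) \<and> g \<in> B2 n}"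
      by blast
  next
    fix F :: "nat set \<Rightarrow> nat set \<Rightarrow> 'z"
    assume "F \<in> {(\<lambda>a b. f a b + g a b) | f g. f \<in> (Z2_0 n :: (nat set \<Rightarrow> nat set \<Rightarrow> 'z) set) \<and> g \<in> B2 n}"
    then obtain f g where F: "F = (\<lambda>a b. f a b + g a b)" and f: "f \<in> Z2_0 n" and g: "g \<in> B2 n" by blast
    have "f \<in> Z2 n" using f unfolding Z2_0_def by simp
    moreover have "g \<in> Z2 n" using g cob_Z2[OF char2] unfolding B2_eq by blast
    ultimately show "F \<in> Z2 n" unfolding F by (rule Z2_add)
  qed
next
  have c: "\<And>x::'z. x + x = 0" using char2 by blast
  show "Z2_0 n \<inter> B2 n = {(\<lambda>a b. 0 :: 'z)}"
  proof (rule set_eqI, rule iffI)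
    fix F :: "nat set \<Rightarrow> nat set \<Rightarrow> 'z"
    assume "F \<in> Z2_0 n \<inter> B2 n"
    then obtain g where F: "F = cob n g" and g0: "g {} = 0" and F0: "F \<in> Z2_0 n"
      unfolding B2_eq by blast
    have H: "g (insert i \<sigma>) + g \<sigma> + g {i} = 0"
      if ne: "\<sigma> \<noteq> {}" and sub: "\<sigma> \<subseteq> {1..n}" and i: "i \<in> {1..n}" and mx: "i > Max \<sigma>" for \<sigma> i
    proof -
      have lt: "\<forall>x\<in>\<sigma>. x < i" using max_less[OF ne sub mx] .
      have ni: "i \<notin> \<sigma>" using lt by blast
      have V: "\<sigma> \<in> Vn n" "{i} \<in> Vn n" using sub i unfolding Vn_def by auto
      have "F \<sigma> {i} = 0" using F0 ne sub i mx unfolding Z2_0_def by blast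
      then show ?thesis using V ins_sym[OF ni] unfolding F cob_def by simp
    qed
    have add: "g \<tau> = (\<Sum>j\<in>\<tau>. g {j})" if "\<tau> \<subseteq> {1..n}" for \<tau>
      using additive[OF char2 g0 H that] by blast
    have "F = (\<lambda>a b. 0)"
    proof (intro ext)
      fix a b
      show "F a b = 0"
      proof (cases "a \<in> Vn n \<and> b \<in> Vn n")
        case True
        then have s: "a \<subseteq> {1..n}" "b \<subseteq> {1..n}" "symdiff a b \<subseteq> {1..n}"
          using symdiff_V[of a n b] unfolding Vn_def by auto
        have fa: "finite a" "finite b" using finite_subset[OF s(1)] finite_subset[OF s(2)] by auto
        show ?thesis unfolding F cob_def using True add[OF s(1)] add[OF s(2)] add[OF s(3)]
          sum_symdiff[OF char2 fa, of "\<lambda>j. g {j}"] by simp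
      next
        case False then show ?thesis unfolding F cob_def by auto
      qed
    qed
    then show "F \<in> {(\<lambda>a b. 0 :: 'z)}" by simp
  next
    fix F :: "nat set \<Rightarrow> nat set \<Rightarrow> 'z"
    assume "F \<in> {(\<lambda>a b. 0 :: 'z)}"
    then have F: "F = (\<lambda>a b. 0)" by simp
    have "F = cob n (\<lambda>_. 0)" unfolding F cob_def by (intro ext) simp
    then have "F \<in> B2 n" unfolding B2_eq by blast
    moreover have "F \<in> Z2_0 n" unfolding F Z2_0_def Z2_def by simp
    ultimately show "F \<in> Z2_0 n \<inter> B2 n" by blast
  qed
qed

end
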